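(* Let $r\in\{0,\ldots,N\}$ and suppose $\xi_r(\varpi^N)<1/2$. Then for all $A,A'\in\mathbb{R}^{n\times s}$, $$\|\phi(A')-\phi(A)\|_1\le \frac{1}{1-2\xi_r(\varpi^N)}\Big(\mathcal{J}(A')-\mathcal{J}(A)+2\delta_r(A)\Big).$$
   Context: Data: integers $n,s,N\ge1$ and a dataset $\varpi^N=((x_1,y_1),\ldots,(x_N,y_N))$ with $x_t\in\mathbb{R}^n$, $y_t\in\mathbb{R}$. Let $\mathbb{T}=\{1,\ldots,N\}$, $\mathbb{S}=\{1,\ldots,s\}$. For $A=[a_1\ \cdots\ a_s]\in\mathbb{R}^{n\times s}$, $\sigma_A:\mathbb{T}\to\mathbb{S}$ is a switching signal satisfying $\sigma_A(t)\in\arg\min_{i\in\mathbb{S}}|y_t-x_t^\top a_i|$ for all $t$, selected uniquely by a fixed rule depending only on $A$ and the data (among all admissible choices, one maximizing $\min_{i}|I_i(A)|$, ties then broken by assigning the smallest admissible index). $I_i(A)=\{t\in\mathbb{T}:\sigma_A(t)=i\}$. Define $\phi(A)=\big(y_1-x_1^\top a_{\sigma_A(1)},\ldots,y_N-x_N^\top a_{\sigma_A(N)}\big)^\top\in\mathbb{R}^N$ and $\mathcal{J}(A)=\|\phi(A)\|_1=\sum_{t=1}^N\min_{i\in\mathbb{S}}|y_t-a_i^\top x_t|$. For $\mathcal{T}\subset\mathbb{T}$, $\phi_{\mathcal{T}}(A)$ is the subvector of $\phi(A)$ indexed by $\mathcal{T}$. $\mathcal{S}_r=\{w\in\mathbb{R}^N:\|w\|_0\le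 r\}$ ($\|w\|_0$ = number of nonzero entries), and $\delta_r(A)=\inf_{w\in\mathcal{S}_r}\|\phi(A)-w\|_1$, i.e. the sum of the $N-r$ smallest absolute values of entries of $\phi(A)$. The $r$-th concentration ratio is $$\xi_r(\varpi^N)=\sup\Big\{\frac{\|\phi_{\mathcal{T}}(A)-\phi_{\mathcal{T}}(A')\|_1}{\|\phi(A)-\phi(A')\|_1}: A,A'\in\mathbb{R}^{n\times s},\ \mathcal{T}\subset\mathbb{T},\ \phi(A)\ne\phi(A'),\ |\mathcal{T}|\le r\Big\}.$$ *)

theory Defs
  imports "HOL-Analysis.Analysis" "HOL-Library.List_Lexorder"
begin

text \<open>A parameter matrix A = [a_1 ... a_s] is represented by its columns A i :: real^'n,
  only i in {1..s} being relevant. Vectors of R^N are functions nat => real,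
  indexed by {1..N}.\<close>

definition res :: "(nat \<Rightarrow> real^'n) \<Rightarrow> (nat \<Rightarrow> real) \<Rightarrow> (nat \<Rightarrow> real^'n) \<Rightarrow> nat \<Rightarrow> nat \<Rightarrow> real" where
  "res x y A t i = y t - (x t \<bullet> A i)"

text \<open>A switching signal is encoded as a list sl of length N, with sigma(t) = sl ! (t - 1).\<close>
definition admissible_signal ::
  "(nat \<Rightarrow> real^'n) \<Rightarrow> (nat \<Rightarrow> real) \<Rightarrow> nat \<Rightarrow> nat \<Rightarrow> (nat \<Rightarrow> real^'n) \<Rightarrow> nat list \<Rightarrow> bool" where
  "admissible_signal x y N s A sl \<longleftrightarrow> length sl = N \<and>
     (\<forall>t\<in>{1..N}. sl ! (t - 1) \<in> {1..s} \<and>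
        (\<forall>i\<in>{1..s}. \<bar>res x y A t (sl ! (t - 1))\<bar> \<le> \<bar>res x y A t i\<bar>))"

definition mode_card :: "nat \<Rightarrow> nat list \<Rightarrow> nat \<Rightarrow> nat" where
  "mode_card N sl i = card {t\<in>{1..N}. sl ! (t - 1) = i}"

definition min_mode_card :: "nat \<Rightarrow> nat \<Rightarrow> nat list \<Rightarrow> nat" where
  "min_mode_card N s sl = Min ((mode_card N sl) ` {1..s})"

definition best_signal ::
  "(nat \<Rightarrow> real^'n) \<Rightarrow> (nat \<Rightarrow> real) \<Rightarrow> nat \<Rightarrow> nat \<Rightarrow> (nat \<Rightarrow> real^'n) \<Rightarrow> nat list \<Rightarrow> bool" where
  "best_signal x y N s A sl \<longleftrightarrow> admissible_signal x y N s A sl \<and>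
     (\<forall>sl'. admissible_signal x y N s A sl' \<longrightarrow> min_mode_card N s sl' \<le> min_mode_card N s sl)"

text \<open>Tie-break: lexicographically smallest (sigma(1), ..., sigma(N)) among the best signals.\<close>
definition sigma_sig ::
  "(nat \<Rightarrow> real^'n) \<Rightarrow> (nat \<Rightarrow> real) \<Rightarrow> nat \<Rightarrow> nat \<Rightarrow> (nat \<Rightarrow> real^'n) \<Rightarrow> nat \<Rightarrow> nat" where
  "sigma_sig x y N s A t = Min {sl. best_signal x y N s A sl} ! (t - 1)"

definition phi ::
  "(nat \<Rightarrow> real^'n) \<Rightarrow> (nat \<Rightarrow> real) \<Rightarrow> nat \<Rightarrow> nat \<Rightarrow> (nat \<Rightarrow> real^'n) \<Rightarrow> nat \<Rightarrow> real" where
  "phi x y N s A t = (if t \<in> {1..N} then res x y A t (sigma_sig x y N s A t) else 0)"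

definition l1norm :: "nat \<Rightarrow> (nat \<Rightarrow> real) \<Rightarrow> real" where
  "l1norm N v = (\<Sum>t=1..N. \<bar>v t\<bar>)"

definition Jcost ::
  "(nat \<Rightarrow> real^'n) \<Rightarrow> (nat \<Rightarrow> real) \<Rightarrow> nat \<Rightarrow> nat \<Rightarrow> (nat \<Rightarrow> real^'n) \<Rightarrow> real" where
  "Jcost x y N s A = (\<Sum>t=1..N. Min ((\<lambda>i. \<bar>res x y A t i\<bar>) ` {1..s}))"

definition l0 :: "nat \<Rightarrow> (nat \<Rightarrow> real) \<Rightarrow> nat" where
  "l0 N w = card {t\<in>{1..N}. w t \<noteq> 0}"

definition delta ::
  "(nat \<Rightarrow> real^'n) \<Rightarrow> (nat \<Rightarrow> real) \<Rightarrow> nat \<Rightarrow> nat \<Rightarrow> nat \<Rightarrow> (nat \<Rightarrow> real^'n) \<Rightarrow> real" where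
  "delta x y N s r A = Inf {l1norm N (\<lambda>t. phi x y N s A t - w t) | w. l0 N w \<le> r}"

definition xi :: "(nat \<Rightarrow> real^'n) \<Rightarrow> (nat \<Rightarrow> real) \<Rightarrow> nat \<Rightarrow> nat \<Rightarrow> nat \<Rightarrow> real" where
  "xi x y N s r = Sup {(\<Sum>t\<in>T. \<bar>phi x y N s A t - phi x y N s A' t\<bar>)
                        / l1norm N (\<lambda>t. phi x y N s A t - phi x y N s A' t) | A A' T.
        T \<subseteq> {1..N} \<and> (\<exists>t\<in>{1..N}. phi x y N s A t \<noteq> phi x y N s A' t) \<and> card T \<le> r}"

end

theory Submission
  imports Defs
begin

lemma adm_finite:
  "finite {sl. admissible_signal x y N s A sl}"
proof -
  have "{sl. admissible_signal x y N s A sl} \<subseteq> {sl. set sl \<subseteq> {1..s} \<and> length sl = N}"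
  proof (rule subsetI, simp only: mem_Collect_eq)
    fix sl assume a: "admissible_signal x y N s A sl"
    show "set sl \<subseteq> {1..s} \<and> length sl = N"
    proof
      show "set sl \<subseteq> {1..s}"
      proof
        fix z assume "z \<in> set sl"
        then obtain k where k: "k < length sl" "sl ! k = z" by (auto simp: in_set_conv_nth)
        have "length sl = N" using a by (simp add: admissible_signal_def)
        then have "Suc k \<in> {1..N}" using k by simp
        moreover from a have "\<forall>t\<in>{1..N}. sl ! (t - 1) \<in> {1..s}" unfolding admissible_signal_def by blast
        ultimately have "sl ! (Suc k - 1) \<in> {1..s}" by blast
        then show "z \<in> {1..s}" using k by simp
      qed
    qed (use a in \<open>simp add: admissible_signal_def\<close>)
  qed
  moreover have "finite {sl. set sl \<subseteq> {1..s} \<and> length sl = N}"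
    by (rule finite_lists_length_eq) simp
  ultimately show ?thesis by (rule finite_subset)
qed

lemma adm_ex:
  assumes "s \<ge> 1"
  shows "\<exists>sl. admissible_signal x y N s A sl"
proof -
  have ex: "\<exists>i. i \<in> {1..s} \<and> (\<forall>j\<in>{1..s}. \<bar>res x y A t i\<bar> \<le> \<bar>res x y A t j\<bar>)" for t
  proof -
    have fin: "finite ((\<lambda>i. \<bar>res x y A t i\<bar>) ` {1..s})" and ne: "(\<lambda>i. \<bar>res x y A t i\<bar>) ` {1..s} \<noteq> {}"
      using assms by auto
    from Min_in[OF fin ne] obtain i where i: "i \<in> {1..s}"
      "\<bar>res x y A t i\<bar> = Min ((\<lambda>i. \<bar>res x y A t i\<bar>) ` {1..s})" by auto
    show ?thesis using i fin by (intro exI[of _ i]) auto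
  qed
  define g where "g t = (SOME i. i \<in> {1..s} \<and> (\<forall>j\<in>{1..s}. \<bar>res x y A t i\<bar> \<le> \<bar>res x y A t j\<bar>))" for t
  have g: "g t \<in> {1..s} \<and> (\<forall>j\<in>{1..s}. \<bar>res x y A t (g t)\<bar> \<le> \<bar>res x y A t j\<bar>)" for t
    unfolding g_def by (rule someI_ex[OF ex])
  define sl where "sl = map g [1..<N+1]"
  have "sl ! (t - 1) = g t" if "t \<in> {1..N}" for t
    using that unfolding sl_def by (auto simp del: upt_Suc simp add: nth_map)
  then have "admissible_signal x y N s A sl"
    using g unfolding admissible_signal_def sl_def by auto
  then show ?thesis by blast
qed

lemma sigma_adm:
  assumes "s \<ge> 1"
  shows "admissible_signal x y N s A (Min {sl. best_signal x y N s A sl})"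
proof -
  let ?S = "{sl. admissible_signal x y N s A sl}"
  have fS: "finite ?S" by (rule adm_finite)
  have nS: "?S \<noteq> {}" using adm_ex[OF assms] by auto
  have fI: "finite (min_mode_card N s ` ?S)" using fS by simp
  have nI: "min_mode_card N s ` ?S \<noteq> {}" using nS by simp
  from Max_in[OF fI nI] obtain sl0 where sl0: "sl0 \<in> ?S"
    "min_mode_card N s sl0 = Max (min_mode_card N s ` ?S)" by auto
  have "best_signal x y N s A sl0"
    unfolding best_signal_def using sl0 Max_ge[OF fI] by auto
  then have nB: "{sl. best_signal x y N s A sl} \<noteq> {}" by blast
  have fB: "finite {sl. best_signal x y N s A sl}"
    by (rule finite_subset[OF _ fS]) (auto simp: best_signal_def)
  from Min_in[OF fB nB] show ?thesis by (auto simp: best_signal_def)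
qed

lemma phi_abs:
  assumes "s \<ge> 1" "t \<in> {1..N}"
  shows "\<bar>phi x y N s A t\<bar> = Min ((\<lambda>i. \<bar>res x y A t i\<bar>) ` {1..s})"
proof -
  have a: "admissible_signal x y N s A (Min {sl. best_signal x y N s A sl})"
    by (rule sigma_adm[OF assms(1)])
  let ?i = "sigma_sig x y N s A t"
  have i: "?i \<in> {1..s}" "\<forall>j\<in>{1..s}. \<bar>res x y A t ?i\<bar> \<le> \<bar>res x y A t j\<bar>"
    using a assms(2) unfolding admissible_signal_def sigma_sig_def by auto
  have "Min ((\<lambda>i. \<bar>res x y A t i\<bar>) ` {1..s}) = \<bar>res x y A t ?i\<bar>"
    using i by (intro Min_eqI) auto
  then show ?thesis using assms(2) by (simp add: phi_def)
qed

lemma J_eq: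
  assumes "s \<ge> 1"
  shows "Jcost x y N s A = l1norm N (phi x y N s A)"
  unfolding Jcost_def l1norm_def by (rule sum.cong[OF refl]) (rule phi_abs[OF assms, symmetric])

theorem lemma2:
  fixes x :: "nat \<Rightarrow> real^'n" and y :: "nat \<Rightarrow> real" and N s r :: nat
  assumes "N \<ge> 1" and "s \<ge> 1" and "r \<le> N"
    and "xi x y N s r < 1/2"
  shows "\<forall>A A' :: nat \<Rightarrow> real^'n.
           l1norm N (\<lambda>t. phi x y N s A' t - phi x y N s A t)
             \<le> 1 / (1 - 2 * xi x y N s r)
                * (Jcost x y N s A' - Jcost x y N s A + 2 * delta x y N s r A)"
proof (intro allI)
  fix A A' :: "nat \<Rightarrow> real^'n"
  define p where "p = phi x y N s A"
  define p' where "p' = phi x y N s A'"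
  define v where "v = (\<lambda>t. p' t - p t)"
  define X where "X = xi x y N s r"
  define c where "c = 1 / (1 - 2 * X)"
  have cpos: "c > 0" using assms(4) unfolding c_def X_def by simp
  have JA: "Jcost x y N s A = l1norm N p" using J_eq[OF assms(2)] p_def by simp
  have JA': "Jcost x y N s A' = l1norm N p'" using J_eq[OF assms(2)] p'_def by simp
  have key: "\<And>T. T \<subseteq> {1..N} \<Longrightarrow> card T \<le> r \<Longrightarrow> (\<Sum>t\<in>T. \<bar>v t\<bar>) \<le> X * l1norm N v"
  proof -
    fix T assume T: "T \<subseteq> {1..N}" "card T \<le> r"
    show "(\<Sum>t\<in>T. \<bar>v t\<bar>) \<le> X * l1norm N v"
    proof (cases "\<exists>t\<in>{1..N}. p' t \<noteq> p t")
      case True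
      let ?Q = "{(\<Sum>t\<in>T. \<bar>phi x y N s A t - phi x y N s A' t\<bar>)
                        / l1norm N (\<lambda>t. phi x y N s A t - phi x y N s A' t) | A A' T.
        T \<subseteq> {1..N} \<and> (\<exists>t\<in>{1..N}. phi x y N s A t \<noteq> phi x y N s A' t) \<and> card T \<le> r}"
      have bdd: "bdd_above ?Q"
      proof (rule bdd_aboveI[of _ 1])
        fix q assume "q \<in> ?Q"
        then obtain B B' :: "nat \<Rightarrow> real^'n" and U :: "nat set" where
          U: "U \<subseteq> {1..N}" and q: "q = (\<Sum>t\<in>U. \<bar>phi x y N s B t - phi x y N s B' t\<bar>) /
             l1norm N (\<lambda>t. phi x y N s B t - phi x y N s B' t)" by blast
        have "(\<Sum>t\<in>U. \<bar>phi x y N s B t - phi x y N s B' t\<bar>) \<le> (\<Sum>t\<in>{1..N}. \<bar>phi x y N s B t - phi x y N s B' t\<bar>)"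
          by (rule sum_mono2) (use U in auto)
        moreover have "0 \<le> (\<Sum>t\<in>U. \<bar>phi x y N s B t - phi x y N s B' t\<bar>)" by (rule sum_nonneg) auto
        moreover have "0 \<le> (\<Sum>t=1..N. \<bar>phi x y N s B t - phi x y N s B' t\<bar>)" by (rule sum_nonneg) auto
        ultimately show "q \<le> 1"
          unfolding q l1norm_def by (smt (verit) divide_le_eq_1)
      qed
      have mem: "(\<Sum>t\<in>T. \<bar>v t\<bar>) / l1norm N v \<in> ?Q"
        unfolding v_def p_def p'_def using T True p_def p'_def
        by (intro CollectI exI[of _ A'] exI[of _ A] exI[of _ T]) auto
      have le: "(\<Sum>t\<in>T. \<bar>v t\<bar>) / l1norm N v \<le> X"
        unfolding X_def xi_def by (rule cSup_upper[OF mem bdd])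
      have pos: "l1norm N v > 0"
      proof -
        from True obtain t0 where t0: "t0 \<in> {1..N}" "p' t0 \<noteq> p t0" by blast
        have "0 < \<bar>v t0\<bar>" using t0 by (simp add: v_def)
        also have "\<bar>v t0\<bar> \<le> l1norm N v" unfolding l1norm_def
          by (rule member_le_sum) (use t0 in auto)
        finally show ?thesis .
      qed
      then show ?thesis using le by (simp add: divide_le_eq mult.commute)
    next
      case False
      then have "\<forall>t\<in>T. v t = 0" using T by (auto simp: v_def)
      moreover have "l1norm N v = 0" using False by (auto simp: l1norm_def v_def)
      ultimately show ?thesis by simp
    qed
  qed
  let ?D = "{l1norm N (\<lambda>t. phi x y N s A t - w t) | w. l0 N w \<le> r}"
  have each: "(l1norm N v / c - l1norm N p' + l1norm N p) / 2 \<le> e" if "e \<in> ?D" for e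
  proof -
    from that obtain w where w: "l0 N w \<le> r" "e = l1norm N (\<lambda>t. p t - w t)"
      unfolding p_def by blast
    define T where "T = {t\<in>{1..N}. w t \<noteq> 0}"
    have T: "T \<subseteq> {1..N}" "card T \<le> r" using w unfolding T_def l0_def by auto
    have pt: "\<bar>p' t\<bar> - \<bar>p t\<bar> \<ge> \<bar>v t\<bar> - 2 * (if t \<in> T then \<bar>v t\<bar> else 0) - 2 * \<bar>p t - w t\<bar>"
      if "t \<in> {1..N}" for t
    proof (cases "t \<in> T")
      case True
      have "- \<bar>p' t - p t\<bar> \<le> \<bar>p' t\<bar> - \<bar>p t\<bar>" by linarith
      moreover have "0 \<le> \<bar>p t - w t\<bar>" by simp
      ultimately show ?thesis using True unfolding v_def
        by (smt (verit) abs_ge_zero)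
    next
      case False then have "w t = 0" using that by (auto simp: T_def)
      then show ?thesis using False unfolding v_def by auto
    qed
    have "(\<Sum>t=1..N. \<bar>p' t\<bar> - \<bar>p t\<bar>) \<ge> (\<Sum>t=1..N. \<bar>v t\<bar> - 2 * (if t \<in> T then \<bar>v t\<bar> else 0) - 2 * \<bar>p t - w t\<bar>)"
      by (rule sum_mono) (use pt in auto)
    moreover have "(\<Sum>t=1..N. (if t \<in> T then \<bar>v t\<bar> else 0)) = (\<Sum>t\<in>T. \<bar>v t\<bar>)"
      using T(1) by (simp add: sum.If_cases Int_absorb1 inf.absorb2)
    ultimately have "l1norm N p' - l1norm N p \<ge> l1norm N v - 2 * (\<Sum>t\<in>T. \<bar>v t\<bar>) - 2 * e"
      unfolding l1norm_def w(2) by (simp add: sum_subtractf sum_distrib_left[symmetric])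
    moreover have "(\<Sum>t\<in>T. \<bar>v t\<bar>) \<le> X * l1norm N v" by (rule key[OF T])
    ultimately have "l1norm N p' - l1norm N p + 2 * e \<ge> (1 - 2 * X) * l1norm N v"
      by (simp add: algebra_simps)
    moreover have "l1norm N v / c = (1 - 2 * X) * l1norm N v" unfolding c_def by simp
    ultimately show ?thesis by simp
  qed
  have "l1norm N (\<lambda>t. phi x y N s A t - (\<lambda>_. 0) t) \<in> ?D"
    by (rule CollectI, rule exI[of _ "\<lambda>_. 0"]) (simp add: l0_def)
  then have Dne: "?D \<noteq> {}" by (rule ex_in_conv[THEN iffD1, OF exI])
  have "(l1norm N v / c - l1norm N p' + l1norm N p) / 2 \<le> Inf ?D"
    by (rule cInf_greatest[OF Dne each])
  then have d: "(l1norm N v / c - l1norm N p' + l1norm N p) / 2 \<le> delta x y N s r A"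
    unfolding delta_def .
  have "l1norm N v = c * (l1norm N v / c)" using cpos by simp
  also have "\<dots> \<le> c * (l1norm N p' - l1norm N p + 2 * delta x y N s r A)"
  proof (rule mult_left_mono)
    show "l1norm N v / c \<le> l1norm N p' - l1norm N p + 2 * delta x y N s r A"
      using d by (simp add: field_simps)
    show "0 \<le> c" using cpos by simp
  qed
  finally have "l1norm N v \<le> c * (l1norm N p' - l1norm N p + 2 * delta x y N s r A)" .
  then show "l1norm N (\<lambda>t. phi x y N s A' t - phi x y N s A t)
             \<le> 1 / (1 - 2 * xi x y N s r)
                * (Jcost x y N s A' - Jcost x y N s A + 2 * delta x y N s r A)"
    unfolding JA JA' c_def X_def v_def p_def p'_def .
qed

end
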